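(* Let $G$ be a connected chordal graph with at least two vertices. A vertex $v\in V(G)$ is an $\mathcal{L}$-branch leaf of some perfect elimination ordering of $G$ if and only if $v$ is simplicial in $G$.
   Context: Graphs are finite, simple, undirected. A graph is chordal if it has no induced cycle of length at least 4. A vertex is simplicial if its neighborhood is a clique. A vertex ordering $\sigma$ of $G$ (a bijection $\{1,\dots,n\}\to V(G)$, with $u\prec_\sigma w$ meaning $u$ comes before $w$) is a perfect elimination ordering (PEO) if every vertex $v$ is simplicial in the subgraph induced by $\{w : w\prec_\sigma v\}\cup\{v\}$, i.e., the neighbors of $v$ to its left form a clique. For an ordering $\sigma$ of a connected graph in which every vertex other than $\sigma(1)$ has a neighbor to its left (as is the case for PEOs of connected chordal graphs), the $\mathcal{L}$-tree of $\sigma$ is the spanning tree containing, for each $v\neq\sigma(1)$, the edge from $v$ to its rightmost neighbor $w$ with $w\prec_\sigma v$. A vertex $v\neq\sigma(1)$ that is a leaf of the $\mathcal{L}$-tree is an $\mathcal{L}$-branch leaf of $\sigma$. *)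

theory Defs
  imports Main
begin

definition graph :: "'a set \<Rightarrow> ('a \<Rightarrow> 'a \<Rightarrow> bool) \<Rightarrow> bool" where
  "graph V E \<longleftrightarrow> finite V \<and> (\<forall>x y. E x y \<longrightarrow> x \<in> V \<and> y \<in> V)
     \<and> (\<forall>x y. E x y \<longrightarrow> E y x) \<and> (\<forall>x. \<not> E x x)"

definition connected_graph :: "'a set \<Rightarrow> ('a \<Rightarrow> 'a \<Rightarrow> bool) \<Rightarrow> bool" where
  "connected_graph V E \<longleftrightarrow>
     (\<forall>u\<in>V. \<forall>w\<in>V. (\<lambda>x y. x \<in> V \<and> y \<in> V \<and> E x y)\<^sup>*\<^sup>* u w)"

definition induced_cycle :: "'a set \<Rightarrow> ('a \<Rightarrow> 'a \<Rightarrow> bool) \<Rightarrow> 'a list \<Rightarrow> bool" where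
  "induced_cycle V E c \<longleftrightarrow> length c \<ge> 3 \<and> distinct c \<and> set c \<subseteq> V \<and>
     (\<forall>i<length c. \<forall>j<length c.
        E (c!i) (c!j) \<longleftrightarrow> (j = Suc i mod length c \<or> i = Suc j mod length c))"

definition chordal :: "'a set \<Rightarrow> ('a \<Rightarrow> 'a \<Rightarrow> bool) \<Rightarrow> bool" where
  "chordal V E \<longleftrightarrow> (\<forall>c. induced_cycle V E c \<longrightarrow> length c < 4)"

definition simplicial :: "'a set \<Rightarrow> ('a \<Rightarrow> 'a \<Rightarrow> bool) \<Rightarrow> 'a \<Rightarrow> bool" where
  "simplicial V E v \<longleftrightarrow>
     (\<forall>u\<in>V. \<forall>w\<in>V. E v u \<and> E v w \<and> u \<noteq> w \<longrightarrow> E u w)"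

text \<open>A vertex ordering is a list enumerating V without repetition; position i (0-based)
corresponds to sigma(i+1).\<close>

definition vertex_ordering :: "'a set \<Rightarrow> 'a list \<Rightarrow> bool" where
  "vertex_ordering V \<sigma> \<longleftrightarrow> distinct \<sigma> \<and> set \<sigma> = V"

definition peo :: "'a set \<Rightarrow> ('a \<Rightarrow> 'a \<Rightarrow> bool) \<Rightarrow> 'a list \<Rightarrow> bool" where
  "peo V E \<sigma> \<longleftrightarrow> vertex_ordering V \<sigma> \<and>
     (\<forall>i<length \<sigma>. \<forall>j<i. \<forall>k<i.
        E (\<sigma>!i) (\<sigma>!j) \<and> E (\<sigma>!i) (\<sigma>!k) \<and> j \<noteq> k \<longrightarrow> E (\<sigma>!j) (\<sigma>!k))"

definition left_nbrs :: "('a \<Rightarrow> 'a \<Rightarrow> bool) \<Rightarrow> 'a list \<Rightarrow> nat \<Rightarrow> nat set" where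
  "left_nbrs E \<sigma> i = {j. j < i \<and> E (\<sigma>!i) (\<sigma>!j)}"

text \<open>Edges of the L-tree: for each position i > 0, the edge between sigma!i and its
rightmost left neighbour (the L-tree is only considered for orderings in which every
non-first vertex has a left neighbour).\<close>

definition ltree_edge :: "('a \<Rightarrow> 'a \<Rightarrow> bool) \<Rightarrow> 'a list \<Rightarrow> 'a \<Rightarrow> 'a \<Rightarrow> bool" where
  "ltree_edge E \<sigma> x y \<longleftrightarrow>
     (\<exists>i. 0 < i \<and> i < length \<sigma> \<and> left_nbrs E \<sigma> i \<noteq> {} \<and>
        ((x = \<sigma>!i \<and> y = \<sigma>!(Max (left_nbrs E \<sigma> i))) \<or>
         (y = \<sigma>!i \<and> x = \<sigma>!(Max (left_nbrs E \<sigma> i)))))"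

definition lbranch_leaf :: "('a \<Rightarrow> 'a \<Rightarrow> bool) \<Rightarrow> 'a list \<Rightarrow> 'a \<Rightarrow> bool" where
  "lbranch_leaf E \<sigma> v \<longleftrightarrow> v \<in> set \<sigma> \<and> v \<noteq> hd \<sigma> \<and> card {w. ltree_edge E \<sigma> v w} = 1"

end

theory Submission
  imports Defs
begin


definition walk :: "('b \<Rightarrow> 'b \<Rightarrow> bool) \<Rightarrow> (nat \<Rightarrow> 'b) \<Rightarrow> nat \<Rightarrow> bool" where
  "walk r f n \<longleftrightarrow> (\<forall>k<n. r (f k) (f (Suc k)))"

lemma walk_shorter: "walk r f n \<Longrightarrow> m \<le> n \<Longrightarrow> walk r f m"
  unfolding walk_def by auto

lemma shortcut:
  assumes w: "walk r f n" and id: "i + d \<le> n"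
    and j1: "i + d < n \<Longrightarrow> r (f i) (f (Suc (i + d)))"
    and j2: "i + d = n \<Longrightarrow> f i = f n"
  defines "g \<equiv> \<lambda>m. if m \<le> i then f m else f (m + d)"
  shows "walk r g (n - d)" and "g 0 = f 0" and "g (n - d) = f n"
    and "\<And>m. 0 < m \<Longrightarrow> m < n - d \<Longrightarrow> \<exists>m'. 0 < m' \<and> m' < n \<and> g m = f m'"
    and "\<And>m. m \<le> n - d \<Longrightarrow> \<exists>m'\<le>n. g m = f m'"
proof -
  show "walk r g (n - d)" unfolding walk_def
  proof (intro allI impI)
    fix k assume k: "k < n - d"
    show "r (g k) (g (Suc k))"
    proof (cases "k < i")
      case True then show ?thesis using w k unfolding walk_def g_def by auto
    next
      case False
      show ?thesis
      proof (cases "k = i")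
        case True
        then show ?thesis using j1 k unfolding g_def by auto
      next
        case False
        then have "k > i" using \<open>\<not> k < i\<close> by auto
        then show ?thesis using w k unfolding walk_def g_def by auto
      qed
    qed
  qed
  show "g 0 = f 0" unfolding g_def by auto
  show "g (n - d) = f n"
  proof (cases "n - d \<le> i")
    case True
    then have "i + d = n" using id by auto
    then show ?thesis using j2 True unfolding g_def by auto
  next
    case False then show ?thesis using id unfolding g_def by auto
  qed
  show "\<exists>m'. 0 < m' \<and> m' < n \<and> g m = f m'" if "0 < m" "m < n - d" for m
  proof (cases "m \<le> i")
    case True then show ?thesis using that id unfolding g_def by auto
  next
    case False then show ?thesis using that id unfolding g_def
      by (intro exI[of _ "m + d"]) auto
  qed
  show "\<exists>m'\<le>n. g m = f m'" if "m \<le> n - d" for m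
  proof (cases "m \<le> i")
    case True then show ?thesis using that id unfolding g_def
      by (intro exI[of _ "m"]) auto
  next
    case False then show ?thesis using that id unfolding g_def
      by (intro exI[of _ "m + d"]) auto
  qed
qed

lemma rtranclp_walk: "r\<^sup>*\<^sup>* x y \<Longrightarrow> \<exists>f n. f 0 = x \<and> f n = y \<and> walk r f n"
proof (induction rule: rtranclp_induct)
  case base
  then show ?case by (rule exI[of _ "\<lambda>_. x"], rule exI[of _ 0]) (auto simp: walk_def)
next
  case (step y z)
  then obtain f n where f: "f 0 = x" "f n = y" "walk r f n" by auto
  show ?case
    apply (rule exI[of _ "f(Suc n := z)"], rule exI[of _ "Suc n"])
    using f step(2) by (auto simp: walk_def less_Suc_eq)
qed

definition restr :: "('a \<Rightarrow> 'a \<Rightarrow> bool) \<Rightarrow> 'a set \<Rightarrow> 'a \<Rightarrow> 'a \<Rightarrow> bool" where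
  "restr E W = (\<lambda>x y. x \<in> W \<and> y \<in> W \<and> E x y)"

lemma graph_restr: "graph V E \<Longrightarrow> W \<subseteq> V \<Longrightarrow> graph W (restr E W)"
  unfolding graph_def restr_def by (auto intro: finite_subset)

lemma chordal_restr: "chordal V E \<Longrightarrow> W \<subseteq> V \<Longrightarrow> chordal W (restr E W)"
proof -
  assume c: "chordal V E" and W: "W \<subseteq> V"
  show ?thesis unfolding chordal_def
  proof (intro allI impI)
    fix cy assume ic: "induced_cycle W (restr E W) cy"
    have "induced_cycle V E cy"
      using ic W unfolding induced_cycle_def restr_def
      by (auto simp: subset_iff)
    then show "length cy < 4" using c unfolding chordal_def by auto
  qed
qed



lemma min_walk:
  assumes "walk E f0 n0" "f0 0 = u" "f0 n0 = w" "\<forall>k. 0<k \<and> k<n0 \<longrightarrow> f0 k \<in> X"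
  shows "\<exists>f n. walk E f n \<and> f 0 = u \<and> f n = w \<and> (\<forall>k. 0<k \<and> k<n \<longrightarrow> f k \<in> X)
     \<and> (\<forall>i j. i<j \<and> j\<le>n \<longrightarrow> f i \<noteq> f j) \<and> (\<forall>i j. i<j \<and> j\<le>n \<and> E (f i) (f j) \<longrightarrow> j = Suc i)"
proof -
  define P where "P n \<longleftrightarrow> (\<exists>f. walk E f n \<and> f 0 = u \<and> f n = w \<and> (\<forall>k. 0<k \<and> k<n \<longrightarrow> f k \<in> X))" for n
  have P0: "P n0" using assms unfolding P_def by auto
  define n where "n = (LEAST n. P n)"
  have Pn: "P n" unfolding n_def by (rule LeastI[of P, OF P0])
  have minP: "\<not> P m" if "m < n" for m using that not_less_Least unfolding n_def by blast
  obtain f where f: "walk E f n" "f 0 = u" "f n = w" "\<forall>k. 0<k \<and> k<n \<longrightarrow> f k \<in> X"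
    using Pn unfolding P_def by auto
  have sc: False if "0 < d" "i + d \<le> n" "i + d < n \<Longrightarrow> E (f i) (f (Suc (i + d)))"
    "i + d = n \<Longrightarrow> f i = f n" for i d
  proof -
    define g where "g \<equiv> \<lambda>m. if m \<le> i then f m else f (m + d)"
    have s1: "walk E g (n - d)" and s2: "g 0 = f 0" and s3: "g (n - d) = f n"
      and s4: "\<And>m. 0 < m \<Longrightarrow> m < n - d \<Longrightarrow> \<exists>m'. 0 < m' \<and> m' < n \<and> g m = f m'"
      unfolding g_def by (rule shortcut[OF f(1) that(2) that(3) that(4)], assumption+)+
    have "P (n - d)" unfolding P_def
    proof (intro exI conjI)
      show "walk E g (n - d)" by (rule s1)
      show "g 0 = u" using s2 f(2) by simp
      show "g (n - d) = w" using s3 f(3) by simp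
      show "\<forall>k. 0 < k \<and> k < n - d \<longrightarrow> g k \<in> X"
        using s4 f(4) by metis
    qed
    moreover have "n - d < n" using that(1,2) by auto
    ultimately show False using minP by blast
  qed
  have inj: "\<forall>i j. i<j \<and> j\<le>n \<longrightarrow> f i \<noteq> f j"
  proof (intro allI impI)
    fix i j assume ij: "i < j \<and> j \<le> n"
    show "f i \<noteq> f j"
    proof
      assume eq: "f i = f j"
      show False
      proof (rule sc[of "j - i" i])
        show "0 < j - i" using ij by auto
        show "i + (j - i) \<le> n" using ij by auto
        show "E (f i) (f (Suc (i + (j - i))))" if "i + (j - i) < n"
          using f(1) that ij eq unfolding walk_def by auto
        show "f i = f n" if "i + (j - i) = n" using that ij eq by auto
      qed
    qed
  qed
  have chl: "\<forall>i j. i<j \<and> j\<le>n \<and> E (f i) (f j) \<longrightarrow> j = Suc i"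
  proof (intro allI impI)
    fix i j assume ij: "i < j \<and> j \<le> n \<and> E (f i) (f j)"
    show "j = Suc i"
    proof (rule ccontr)
      assume ne: "j \<noteq> Suc i"
      show False
      proof (rule sc[of "j - i - 1" i])
        show "0 < j - i - 1" using ij ne by auto
        show "i + (j - i - 1) \<le> n" using ij by auto
        show "E (f i) (f (Suc (i + (j - i - 1))))" if "i + (j - i - 1) < n"
          using ij ne by (metis Suc_diff_Suc add_Suc_right diff_Suc_1 le_add_diff_inverse less_imp_le_nat)
        show "f i = f n" if "i + (j - i - 1) = n" using that ij by auto
      qed
    qed
  qed
  show ?thesis using f inj chl by blast
qed



lemma graph_sym: "graph V E \<Longrightarrow> E x y \<Longrightarrow> E y x" unfolding graph_def by blast
lemma graph_irr: "graph V E \<Longrightarrow> \<not> E x x" unfolding graph_def by blast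
lemma graph_V1: "graph V E \<Longrightarrow> E x y \<Longrightarrow> x \<in> V" unfolding graph_def by blast
lemma graph_V2: "graph V E \<Longrightarrow> E x y \<Longrightarrow> y \<in> V" unfolding graph_def by blast

lemma mod_cases:
  assumes "i < j" "j < (N::nat)"
  shows "(j = Suc i mod N \<or> i = Suc j mod N) \<longleftrightarrow> (j = Suc i \<or> (i = 0 \<and> j = N - 1))"
proof -
  have a: "Suc i mod N = Suc i" using assms by auto
  show ?thesis
  proof (cases "Suc j = N")
    case True then show ?thesis using a assms by auto
  next
    case False then have "Suc j mod N = Suc j" using assms by auto
    then show ?thesis using a assms False by auto
  qed
qed

lemma no_sep_cycle:
  assumes G: "graph V E" and ch: "chordal V E" and uw: "u \<noteq> w" "\<not> E u w"
    and f0: "walk E f0 n0" "f0 0 = u" "f0 n0 = w" "\<forall>k. 0<k \<and> k<n0 \<longrightarrow> f0 k \<in> X \<union> {u,w}"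
    and g0: "walk E g0 m0" "g0 0 = u" "g0 m0 = w" "\<forall>k. 0<k \<and> k<m0 \<longrightarrow> g0 k \<in> Y \<union> {u,w}"
    and XY: "X \<inter> Y = {}" "\<forall>x\<in>X. \<forall>y\<in>Y. \<not> E x y" and uXY: "u \<notin> X \<union> Y" "w \<notin> X \<union> Y"
  shows False
proof -
  obtain f p where f: "walk E f p" "f 0 = u" "f p = w" "\<forall>k. 0<k \<and> k<p \<longrightarrow> f k \<in> X \<union> {u,w}"
    and finj: "\<forall>i j. i<j \<and> j\<le>p \<longrightarrow> f i \<noteq> f j"
    and fch: "\<forall>i j. i<j \<and> j\<le>p \<and> E (f i) (f j) \<longrightarrow> j = Suc i"
    using min_walk[OF f0] by blast
  obtain g q where g: "walk E g q" "g 0 = u" "g q = w" "\<forall>k. 0<k \<and> k<q \<longrightarrow> g k \<in> Y \<union> {u,w}"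
    and ginj: "\<forall>i j. i<j \<and> j\<le>q \<longrightarrow> g i \<noteq> g j"
    and gch: "\<forall>i j. i<j \<and> j\<le>q \<and> E (g i) (g j) \<longrightarrow> j = Suc i"
    using min_walk[OF g0] by blast
  have fX: "f k \<in> X" if "0 < k" "k < p" for k
    using f(2,3,4) finj that by (metis UnE insertE singletonD less_imp_le order_refl)
  have gY: "g k \<in> Y" if "0 < k" "k < q" for k
    using g(2,3,4) ginj that by (metis UnE insertE singletonD less_imp_le order_refl)
  have p2: "p \<ge> 2"
  proof -
    have "p \<noteq> 0"
    proof
      assume "p = 0" then show False using f(2,3) uw by simp
    qed
    moreover have "p \<noteq> 1"
    proof
      assume "p = 1" then show False using f(1,2,3) uw unfolding walk_def by auto
    qed
    ultimately show ?thesis by auto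
  qed
  have q2: "q \<ge> 2"
  proof -
    have "q \<noteq> 0"
    proof
      assume "q = 0" then show False using g(2,3) uw by simp
    qed
    moreover have "q \<noteq> 1"
    proof
      assume "q = 1" then show False using g(1,2,3) uw unfolding walk_def by auto
    qed
    ultimately show ?thesis by auto
  qed
  have fV: "f k \<in> V" if "k \<le> p" for k
  proof (cases "k < p")
    case True then show ?thesis using f(1) G graph_V1 unfolding walk_def by metis
  next
    case False have "k = Suc (p - 1)" using False that p2 by auto
    moreover have "p - 1 < p" using p2 by auto
    then have "E (f (p-1)) (f (Suc (p-1)))" using f(1) unfolding walk_def by blast
    ultimately show ?thesis using G graph_V2 by metis
  qed
  have gV: "g k \<in> V" if "k \<le> q" for k
  proof (cases "k < q")
    case True then show ?thesis using g(1) G graph_V1 unfolding walk_def by metis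
  next
    case False have "k = Suc (q - 1)" using False that q2 by auto
    moreover have "q - 1 < q" using q2 by auto
    then have "E (g (q-1)) (g (Suc (q-1)))" using g(1) unfolding walk_def by blast
    ultimately show ?thesis using G graph_V2 by metis
  qed
  define N where "N = p + q"
  define h where "h i = (if i \<le> p then f i else g (N - i))" for i
  have hg: "h i = g (N - i)" if "p \<le> i" "i \<le> N" for i
    using that f(3) g(3) unfolding h_def N_def by auto
  have hV: "h i \<in> V" if "i < N" for i
    using that fV gV unfolding h_def N_def by auto
  have key: "(E (h i) (h j) \<longleftrightarrow> (j = Suc i \<or> (i = 0 \<and> j = N - 1))) \<and> h i \<noteq> h j"
    if ij: "i < j" "j < N" for i j
  proof (cases "j \<le> p")
    case True
    then have hi: "h i = f i" "h j = f j" using ij unfolding h_def by auto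
    have "E (h i) (h j) \<longleftrightarrow> j = Suc i"
      using fch f(1) ij True hi unfolding walk_def by (metis Suc_le_lessD)
    moreover have "\<not> (i = 0 \<and> j = N - 1)" using True q2 unfolding N_def by auto
    moreover have "h i \<noteq> h j" using finj hi ij True by auto
    ultimately show ?thesis by auto
  next
    case jp: False
    show ?thesis
    proof (cases "i = 0")
      case True
      have h0: "h i = g 0" using True f(2) g(2) unfolding h_def by auto
      have hj: "h j = g (N - j)" using hg jp ij by auto
      have r: "0 < N - j" "N - j < q" using ij jp unfolding N_def by auto
      have "E (h i) (h j) \<longleftrightarrow> N - j = 1"
      proof
        assume "E (h i) (h j)"
        then have "E (g 0) (g (N - j))" using h0 hj by simp
        then show "N - j = 1" using gch r by auto
      next
        assume a: "N - j = 1"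
        have "E (g 0) (g (Suc 0))" using g(1) q2 unfolding walk_def by auto
        then show "E (h i) (h j)" using h0 hj a by simp
      qed
      moreover have "N - j = 1 \<longleftrightarrow> j = N - 1" using ij by auto
      moreover have "h i \<noteq> h j" using ginj h0 hj r by auto
      ultimately show ?thesis using True jp p2 by auto
    next
      case i0: False
      show ?thesis
      proof (cases "i < p")
        case True
        have hi: "h i = f i" using True unfolding h_def by auto
        have hj: "h j = g (N - j)" using hg jp ij by auto
        have r: "0 < N - j" "N - j < q" using ij jp unfolding N_def by auto
        have "f i \<in> X" using fX i0 True by auto
        moreover have "g (N - j) \<in> Y" using gY r by auto
        ultimately have "\<not> E (h i) (h j)" "h i \<noteq> h j" using XY hi hj by auto
        then show ?thesis using i0 True jp by auto
      next
        case False
        have hi: "h i = g (N - i)" using hg False ij by auto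
        have hj: "h j = g (N - j)" using hg jp ij by auto
        have r: "N - j < N - i" "N - i \<le> q" using ij False unfolding N_def by auto
        have "E (h i) (h j) \<longleftrightarrow> E (g (N - j)) (g (N - i))" using hi hj graph_sym[OF G] by metis
        also have "\<dots> \<longleftrightarrow> N - i = Suc (N - j)"
        proof
          assume "E (g (N - j)) (g (N - i))"
          then show "N - i = Suc (N - j)" using gch r by blast
        next
          assume a: "N - i = Suc (N - j)"
          have "N - j < q" using r a by auto
          then have "E (g (N - j)) (g (Suc (N - j)))" using g(1) unfolding walk_def by blast
          then show "E (g (N - j)) (g (N - i))" using a by simp
        qed
        also have "\<dots> \<longleftrightarrow> j = Suc i" using ij by auto
        moreover have "g (N - j) \<noteq> g (N - i)" using ginj r by blast
        then have "h i \<noteq> h j" using hi hj by simp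
        ultimately show ?thesis using i0 by auto
      qed
    qed
  qed
  define c where "c = map h [0..<N]"
  have cn: "c ! i = h i" if "i < N" for i using that unfolding c_def by auto
  have lenc: "length c = N" unfolding c_def by auto
  have "induced_cycle V E c"
    unfolding induced_cycle_def
  proof (intro conjI)
    show "3 \<le> length c" using lenc p2 q2 unfolding N_def by auto
    show "distinct c" unfolding distinct_conv_nth lenc
      using key cn by (metis nat_neq_iff)
    show "set c \<subseteq> V" using hV unfolding c_def by auto
    show "\<forall>i<length c. \<forall>j<length c. E (c ! i) (c ! j) = (j = Suc i mod length c \<or> i = Suc j mod length c)"
    proof (intro allI impI)
      fix i j assume i: "i < length c" and j: "j < length c"
      show "E (c ! i) (c ! j) = (j = Suc i mod length c \<or> i = Suc j mod length c)"
      proof (cases i j rule: linorder_cases)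
        case less
        then show ?thesis using key[OF less] mod_cases[OF less] i j cn lenc by auto
      next
        case equal
        have "Suc i mod N \<noteq> i"
        proof (cases "Suc i < N")
          case True then show ?thesis by simp
        next
          case False then have "Suc i = N" using i lenc by auto
          then show ?thesis using p2 q2 unfolding N_def by auto
        qed
        then show ?thesis using equal graph_irr[OF G] lenc by auto
      next
        case greater
        have "E (c ! i) (c ! j) \<longleftrightarrow> E (c ! j) (c ! i)" using graph_sym[OF G] by blast
        then show ?thesis using key[OF greater] mod_cases[OF greater] i j cn lenc by auto
      qed
    qed
  qed
  then have "length c < 4" using ch unfolding chordal_def by auto
  then show False using lenc p2 q2 unfolding N_def by auto
qed



lemma rtranclp_sym:
  assumes "\<And>x y. r x y \<Longrightarrow> r y x" and "r\<^sup>*\<^sup>* x y" shows "r\<^sup>*\<^sup>* y x"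
  using assms(2)
proof (induction rule: rtranclp_induct)
  case base then show ?case by simp
next
  case (step y z)
  then show ?case using assms(1) by (meson converse_rtranclp_into_rtranclp)
qed

lemma simp_exists:
  "graph V E \<Longrightarrow> chordal V E \<Longrightarrow> a \<in> V \<Longrightarrow>
   \<exists>s\<in>V. simplicial V E s \<and> ((\<exists>x\<in>V. x \<noteq> a \<and> \<not> E a x) \<longrightarrow> s \<noteq> a \<and> \<not> E a s)"
proof (induction "card V" arbitrary: V E a rule: less_induct)
  case less
  note G = less.prems(1) and ch = less.prems(2) and aV = less.prems(3)
  have finV: "finite V" using G unfolding graph_def by auto
  show ?case
  proof (cases "\<exists>x\<in>V. x \<noteq> a \<and> \<not> E a x")
    case False
    show ?thesis
    proof (cases "V = {a}")
      case True
      have "simplicial V E a" using True graph_irr[OF G] unfolding simplicial_def by auto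
      then show ?thesis using aV False by auto
    next
      case nV: False
      then obtain a0 where a0: "a0 \<in> V" "a0 \<noteq> a" using aV by auto
      define V' where "V' = V - {a}"
      have cV': "card V' < card V" unfolding V'_def using finV aV by (meson card_Diff1_less)
      have G': "graph V' (restr E V')" using graph_restr[OF G] unfolding V'_def by auto
      have ch': "chordal V' (restr E V')" using chordal_restr[OF ch] unfolding V'_def by auto
      obtain s where s: "s \<in> V'" "simplicial V' (restr E V') s"
        using less.hyps[OF cV' G' ch', of a0] a0 unfolding V'_def by auto
      have "simplicial V E s" unfolding simplicial_def
      proof (intro ballI impI)
        fix u w assume uw: "u \<in> V" "w \<in> V" "E s u \<and> E s w \<and> u \<noteq> w"
        show "E u w"
        proof (cases "u = a")
          case True then show ?thesis using False uw by auto
        next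
          case ua: False
          show ?thesis
          proof (cases "w = a")
            case True
            have "E a u" using False uw ua by auto
            then show ?thesis using True graph_sym[OF G, of a u] by simp
          next
            case False
            have "u \<in> V'" "w \<in> V'" using uw ua False unfolding V'_def by auto
            moreover have "s \<in> V'" using s(1) .
            ultimately have "restr E V' s u" "restr E V' s w" using uw unfolding restr_def by auto
            then have "restr E V' u w" using s(2) \<open>u \<in> V'\<close> \<open>w \<in> V'\<close> uw
              unfolding simplicial_def by blast
            then show ?thesis unfolding restr_def by auto
          qed
        qed
      qed
      then show ?thesis using s(1) False unfolding V'_def by auto
    qed
  next
    case True
    then obtain b where b: "b \<in> V" "b \<noteq> a" "\<not> E a b" by auto
    define R where "R = {x\<in>V. x \<noteq> a \<and> \<not> E a x}"
    define RR where "RR = (\<lambda>x y. E x y \<and> x \<in> R \<and> y \<in> R)"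
    define C where "C = {c. RR\<^sup>*\<^sup>* b c}"
    define S where "S = {s\<in>V. s \<notin> C \<and> (\<exists>c\<in>C. E c s)}"
    define W where "W = C \<union> S"
    have bR: "b \<in> R" using b unfolding R_def by auto
    have CR: "c \<in> R" if "c \<in> C" for c
    proof -
      have "RR\<^sup>*\<^sup>* b c" using that unfolding C_def by auto
      then show ?thesis by (induction rule: rtranclp_induct) (auto simp: bR RR_def)
    qed
    have bC: "b \<in> C" unfolding C_def by auto
    have SnR: "s \<notin> R" if "s \<in> S" for s
    proof
      assume sR: "s \<in> R"
      have "s \<in> V \<and> s \<notin> C \<and> (\<exists>c\<in>C. E c s)" using that unfolding S_def by simp
      then obtain c where c: "c \<in> C" "E c s" "s \<notin> C" by blast
      have "RR c s" using c CR sR unfolding RR_def by auto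
      then have "s \<in> C" using c(1) unfolding C_def by auto
      then show False using c by auto
    qed
    have Sa: "E a s" if "s \<in> S" for s
    proof -
      have "s \<in> V \<and> s \<notin> C \<and> (\<exists>c\<in>C. E c s)" using that unfolding S_def by simp
      then obtain c where c: "c \<in> C" "E c s" "s \<in> V" by blast
      have "s \<noteq> a"
      proof
        assume "s = a"
        then have "E a c" using c graph_sym[OF G, of c s] by simp
        then show False using CR[OF c(1)] unfolding R_def by auto
      qed
      then show ?thesis using SnR[OF that] c(3) unfolding R_def by auto
    qed
    have aW: "a \<notin> W" unfolding W_def
      using CR Sa graph_irr[OF G] unfolding R_def by auto
    have WV: "W \<subseteq> V" unfolding W_def S_def using CR unfolding R_def by auto
    have cW: "card W < card V" proof (rule psubset_card_mono[OF finV])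
      show "W \<subset> V" using WV aW aV by blast
    qed
    have nbr: "u \<in> W" if "c \<in> C" "u \<in> V" "E c u" for c u
      using that unfolding W_def S_def by auto
    have Scl: "E x y" if xy: "x \<in> S" "y \<in> S" "x \<noteq> y" for x y
    proof (rule ccontr)
      assume nxy: "\<not> E x y"
      define f0 where "f0 = (\<lambda>k::nat. if k = 0 then x else if k = 1 then a else y)"
      have f0w: "walk E f0 2" unfolding walk_def f0_def
        using Sa[OF xy(1)] Sa[OF xy(2)] graph_sym[OF G, OF Sa[OF xy(1)]] by (auto simp: less_2_cases_iff)
      define r' where "r' = (\<lambda>s t. E s t \<and> s \<in> R \<union> {x,y} \<and> t \<in> R \<union> {x,y})"
      obtain c1 where c1: "c1 \<in> C" "E c1 x" using xy unfolding S_def by auto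
      obtain c2 where c2: "c2 \<in> C" "E c2 y" using xy unfolding S_def by auto
      have mono: "r'\<^sup>*\<^sup>* s t" if "RR\<^sup>*\<^sup>* s t" for s t
      proof -
        have "RR \<le> r'" unfolding RR_def r'_def by auto
        then show ?thesis using that by (metis rtranclp_mono predicate2D)
      qed
      have "RR\<^sup>*\<^sup>* c1 b"
      proof (rule rtranclp_sym)
        show "RR y x" if "RR x y" for x y using that graph_sym[OF G, of x y] unfolding RR_def by auto
        show "RR\<^sup>*\<^sup>* b c1" using c1(1) unfolding C_def by auto
      qed
      then have p1: "r'\<^sup>*\<^sup>* c1 b" by (rule mono)
      have p2: "r'\<^sup>*\<^sup>* b c2" using mono c2(1) unfolding C_def by auto
      have e1: "r' x c1" using c1 CR graph_sym[OF G, OF c1(2)] unfolding r'_def by auto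
      have e2: "r' c2 y" using c2 CR unfolding r'_def by auto
      have "r'\<^sup>*\<^sup>* x y" using e1 p1 p2 e2
        by (meson converse_rtranclp_into_rtranclp rtranclp.rtrancl_into_rtrancl rtranclp_trans)
      then obtain g0 m0 where g0: "g0 0 = x" "g0 m0 = y" "walk r' g0 m0"
        using rtranclp_walk by metis
      have g0E: "walk E g0 m0" using g0(3) unfolding walk_def r'_def by auto
      have g0i: "\<forall>k. 0<k \<and> k<m0 \<longrightarrow> g0 k \<in> R \<union> {x,y}"
        using g0(3) unfolding walk_def r'_def by auto
      show False
      proof (rule no_sep_cycle[OF G ch xy(3) nxy f0w _ _ _ g0E g0(1,2) g0i, of "{a}"])
        show "f0 0 = x" "f0 2 = y" unfolding f0_def by auto
        show "\<forall>k. 0 < k \<and> k < 2 \<longrightarrow> f0 k \<in> {a} \<union> {x, y}" unfolding f0_def by auto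
        show "{a} \<inter> R = {}" unfolding R_def by auto
        show "\<forall>x\<in>{a}. \<forall>y\<in>R. \<not> E x y" unfolding R_def by auto
        show "x \<notin> {a} \<union> R" using SnR[OF xy(1)] Sa[OF xy(1)] graph_irr[OF G] by auto
        show "y \<notin> {a} \<union> R" using SnR[OF xy(2)] Sa[OF xy(2)] graph_irr[OF G] by auto
      qed
    qed
    define E' where "E' = restr E W"
    have G': "graph W E'" using graph_restr[OF G WV] unfolding E'_def .
    have ch': "chordal W E'" using chordal_restr[OF ch WV] unfolding E'_def .
    have lift: "simplicial V E c" if cC: "c \<in> C" and sc: "simplicial W E' c" for c
      unfolding simplicial_def
    proof (intro ballI impI)
      fix u w assume uV: "u \<in> V" and wV: "w \<in> V" and uw: "E c u \<and> E c w \<and> u \<noteq> w"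
      have uW: "u \<in> W" using nbr[OF cC uV] uw by blast
      have wW: "w \<in> W" using nbr[OF cC wV] uw by blast
      have cW: "c \<in> W" using cC unfolding W_def by blast
      have "E' c u" "E' c w" using uW wW cW uw unfolding E'_def restr_def by auto
      then have "E' u w" using sc uW wW uw unfolding simplicial_def by blast
      then show "E u w" unfolding E'_def restr_def by blast
    qed
    have fin: "\<exists>s'\<in>C. simplicial W E' s'"
    proof (cases "\<forall>x\<in>W. \<forall>y\<in>W. x \<noteq> y \<longrightarrow> E x y")
      case True
      have "simplicial W E' b" using True unfolding simplicial_def E'_def restr_def by auto
      then show ?thesis using bC by auto
    next
      case False
      then obtain x y where xy: "x \<in> W" "y \<in> W" "x \<noteq> y" "\<not> E x y" by auto
      show ?thesis
      proof (cases "\<exists>s\<in>S. \<exists>z\<in>W. z \<noteq> s \<and> \<not> E' s z")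
        case True
        then obtain s where s: "s \<in> S" "\<exists>z\<in>W. z \<noteq> s \<and> \<not> E' s z" by auto
        have sW: "s \<in> W" using s unfolding W_def by auto
        obtain s' where s': "s' \<in> W" "simplicial W E' s'" "s' \<noteq> s" "\<not> E' s s'"
          using less.hyps[OF cW G' ch' sW] s(2) by auto
        have "s' \<notin> S"
        proof
          assume "s' \<in> S"
          then have "E s s'" using Scl s(1) s'(3) by auto
          then show False using s'(1,4) sW unfolding E'_def restr_def by auto
        qed
        then show ?thesis using s' unfolding W_def by auto
      next
        case False
        have "x \<notin> S"
        proof
          assume "x \<in> S"
          then have "E' x y" using False xy by auto
          then show False using xy unfolding E'_def restr_def by auto
        qed
        then have xC: "x \<in> C" using xy unfolding W_def by auto
        have "\<exists>z\<in>W. z \<noteq> x \<and> \<not> E' x z" using xy unfolding E'_def restr_def by auto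
        then obtain s' where s': "s' \<in> W" "simplicial W E' s'" "s' \<noteq> x" "\<not> E' x s'"
          using less.hyps[OF cW G' ch' xy(1)] by auto
        have "s' \<notin> S"
        proof
          assume "s' \<in> S"
          then have "E' s' x" using False xy(1) s'(3) by auto
          then have "E' x s'" using graph_sym[OF G'] by blast
          then show False using s'(4) by auto
        qed
        then show ?thesis using s' unfolding W_def by auto
      qed
    qed
    then obtain s' where s': "s' \<in> C" "simplicial W E' s'" by auto
    have "simplicial V E s'" by (rule lift[OF s'])
    moreover have "s' \<in> R" using CR s'(1) by auto
    ultimately show ?thesis unfolding R_def by auto
  qed
qed



lemma peo_snoc:
  assumes G: "graph V E" and vV: "v \<in> V" and sv: "simplicial V E v"
    and p: "peo (V - {v}) (restr E (V - {v})) \<sigma>'"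
  shows "peo V E (\<sigma>' @ [v])"
proof -
  have d: "distinct \<sigma>'" and st: "set \<sigma>' = V - {v}"
    using p unfolding peo_def vertex_ordering_def by auto
  have vo: "vertex_ordering V (\<sigma>' @ [v])"
    unfolding vertex_ordering_def using d st vV by auto
  show ?thesis unfolding peo_def
  proof (intro conjI vo allI impI)
    fix i j k
    assume i: "i < length (\<sigma>' @ [v])" and j: "j < i" and k: "k < i"
      and e: "E ((\<sigma>' @ [v]) ! i) ((\<sigma>' @ [v]) ! j) \<and> E ((\<sigma>' @ [v]) ! i) ((\<sigma>' @ [v]) ! k) \<and> j \<noteq> k"
    have jl: "j < length \<sigma>'" and kl: "k < length \<sigma>'" using i j k by auto
    have sj: "(\<sigma>' @ [v]) ! j = \<sigma>' ! j" and sk: "(\<sigma>' @ [v]) ! k = \<sigma>' ! k"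
      using jl kl by (auto simp: nth_append)
    have jV: "\<sigma>' ! j \<in> V - {v}" and kV: "\<sigma>' ! k \<in> V - {v}"
      using jl kl st nth_mem by blast+
    show "E ((\<sigma>' @ [v]) ! j) ((\<sigma>' @ [v]) ! k)"
    proof (cases "i < length \<sigma>'")
      case True
      have si: "(\<sigma>' @ [v]) ! i = \<sigma>' ! i" using True by (auto simp: nth_append)
      have iV: "\<sigma>' ! i \<in> V - {v}" using True st nth_mem by blast
      have "restr E (V - {v}) (\<sigma>' ! i) (\<sigma>' ! j)" "restr E (V - {v}) (\<sigma>' ! i) (\<sigma>' ! k)"
        using e si sj sk iV jV kV unfolding restr_def by auto
      then have "restr E (V - {v}) (\<sigma>' ! j) (\<sigma>' ! k)"
        using p True j k e unfolding peo_def by blast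
      then show ?thesis using sj sk unfolding restr_def by auto
    next
      case False
      then have "i = length \<sigma>'" using i by auto
      then have si: "(\<sigma>' @ [v]) ! i = v" by auto
      have "\<sigma>' ! j \<noteq> \<sigma>' ! k" using d jl kl e nth_eq_iff_index_eq by blast
      then show ?thesis using sv e si sj sk jV kV unfolding simplicial_def by auto
    qed
  qed
qed

lemma peo_exists: "graph V E \<Longrightarrow> chordal V E \<Longrightarrow> \<exists>\<sigma>. peo V E \<sigma>"
proof (induction "card V" arbitrary: V E rule: less_induct)
  case less
  note G = less.prems(1) and ch = less.prems(2)
  have finV: "finite V" using G unfolding graph_def by auto
  show ?case
  proof (cases "V = {}")
    case True
    have "peo V E []" using True unfolding peo_def vertex_ordering_def by auto
    then show ?thesis by blast
  next
    case False
    then obtain a where aV: "a \<in> V" by auto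
    obtain s where s: "s \<in> V" "simplicial V E s" using simp_exists[OF G ch aV] by auto
    define V' where "V' = V - {s}"
    have cV': "card V' < card V" unfolding V'_def using finV s(1) by (meson card_Diff1_less)
    have G': "graph V' (restr E V')" using graph_restr[OF G] unfolding V'_def by auto
    have ch': "chordal V' (restr E V')" using chordal_restr[OF ch] unfolding V'_def by auto
    obtain \<sigma>' where "peo V' (restr E V') \<sigma>'" using less.hyps[OF cV' G' ch'] by auto
    then have "peo V E (\<sigma>' @ [s])" using peo_snoc[OF G s(1) s(2)] unfolding V'_def by auto
    then show ?thesis by blast
  qed
qed



lemma left_nbr:
  assumes G: "graph V E" and con: "connected_graph V E" and P: "peo V E \<sigma>"
    and i0: "0 < i" and il: "i < length \<sigma>"
  shows "left_nbrs E \<sigma> i \<noteq> {}"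
proof -
  have d: "distinct \<sigma>" and st: "set \<sigma> = V" using P unfolding peo_def vertex_ordering_def by auto
  define x where "x = \<sigma> ! i"
  define y where "y = \<sigma> ! 0"
  have xV: "x \<in> V" unfolding x_def using il st nth_mem by blast
  have l0: "0 < length \<sigma>" using i0 il by linarith
  have yV: "y \<in> V" unfolding y_def using nth_mem[OF l0] st by blast
  define RRV where "RRV = (\<lambda>x y. x \<in> V \<and> y \<in> V \<and> E x y)"
  have "RRV\<^sup>*\<^sup>* x y" using con xV yV unfolding connected_graph_def RRV_def by blast
  then obtain f n where f: "f 0 = x" "f n = y" "walk RRV f n" using rtranclp_walk by metis
  have fV: "f k \<in> V" if "k \<le> n" for k
  proof (cases "k < n")
    case True then show ?thesis using f(3) unfolding walk_def RRV_def by blast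
  next
    case False then have "k = n" using that by auto
    then show ?thesis using f(2) yV by simp
  qed
  have "\<forall>k. \<exists>j. k \<le> n \<longrightarrow> j < length \<sigma> \<and> \<sigma> ! j = f k"
    using fV st by (metis in_set_conv_nth)
  then have "\<exists>p. \<forall>k. k \<le> n \<longrightarrow> p k < length \<sigma> \<and> \<sigma> ! p k = f k" by (rule choice)
  then obtain p where p: "\<And>k. k \<le> n \<Longrightarrow> p k < length \<sigma> \<and> \<sigma> ! p k = f k"
    by blast
  have a0: "p 0 < length \<sigma>" "\<sigma> ! p 0 = \<sigma> ! i" using p[of 0] f(1) unfolding x_def by auto
  have p0: "p 0 = i" using nth_eq_iff_index_eq[OF d a0(1) il] a0(2) by simp
  have an: "p n < length \<sigma>" "\<sigma> ! p n = \<sigma> ! 0" using p[of n] f(2) unfolding y_def by auto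
  have pn: "p n = 0" using nth_eq_iff_index_eq[OF d an(1) l0] an(2) by simp
  define Rp where "Rp = (\<lambda>a b. a < length \<sigma> \<and> b < length \<sigma> \<and> E (\<sigma> ! a) (\<sigma> ! b))"
  have pw: "walk Rp p n" unfolding walk_def Rp_def
  proof (intro allI impI conjI)
    fix k assume k: "k < n"
    show "p k < length \<sigma>" "p (Suc k) < length \<sigma>" using p k by auto
    show "E (\<sigma> ! p k) (\<sigma> ! p (Suc k))" using p[of k] p[of "Suc k"] k f(3)
      unfolding walk_def RRV_def by auto
  qed
  define Q where "Q m \<longleftrightarrow> (\<exists>q. q 0 = i \<and> q m < i \<and> walk Rp q m)" for m
  have Qn: "Q n" unfolding Q_def using p0 pn pw i0 by auto
  define m where "m = (LEAST m. Q m)"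
  have Qm: "Q m" unfolding m_def by (rule LeastI[of Q, OF Qn])
  have minQ: "\<not> Q m'" if "m' < m" for m' using that not_less_Least unfolding m_def by blast
  obtain q where q: "q 0 = i" "q m < i" "walk Rp q m" using Qm unfolding Q_def by auto
  have m0: "m \<noteq> 0"
  proof
    assume "m = 0" then show False using q(1,2) by simp
  qed
  show ?thesis
  proof (cases "m = 1")
    case True
    have "Rp (q 0) (q (Suc 0))" using q(3) True unfolding walk_def by auto
    then have "q 1 \<in> left_nbrs E \<sigma> i" using q(1,2) True unfolding Rp_def left_nbrs_def by auto
    then show ?thesis by auto
  next
    case False
    with m0 have m2: "m \<ge> 2" by auto
    have intl: "q k \<ge> i" if "0 < k" "k < m" for k
    proof (rule ccontr)
      assume "\<not> i \<le> q k"
      then have "Q k" unfolding Q_def using q(1) walk_shorter[OF q(3)] that by auto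
      then show False using minQ that by auto
    qed
    have qlen: "q k < length \<sigma>" if "k \<le> m" for k
    proof (cases "k < m")
      case True then show ?thesis using q(3) unfolding walk_def Rp_def by blast
    next
      case False then have "k = m" using that by auto
      then show ?thesis using q(2) il by auto
    qed
    define K where "K = {1..<m}"
    have Kne: "K \<noteq> {}" "finite K" using m2 unfolding K_def by auto
    define M where "M = Max (q ` K)"
    have "M \<in> q ` K" unfolding M_def using Kne by auto
    then obtain k where kK: "k \<in> K" and qk: "q k = M" by auto
    have Mge: "q k' \<le> M" if "k' \<in> K" for k' unfolding M_def using Kne that by auto
    have k1: "0 < k" "k < m" using kK unfolding K_def by auto
    have Mi: "i \<le> M" using intl k1 qk by auto
    have r1: "Rp (q (k - 1)) (q k)" using q(3) k1 unfolding walk_def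
      by (metis Suc_pred' less_imp_diff_less)
    have r2: "Rp (q k) (q (Suc k))" using q(3) k1 unfolding walk_def by blast
    have ne1: "q (k - 1) \<noteq> q k" using r1 graph_irr[OF G] unfolding Rp_def by auto
    have ne2: "q (Suc k) \<noteq> q k" using r2 graph_irr[OF G] unfolding Rp_def by auto
    have lt1: "q (k - 1) < M"
    proof (cases "k - 1 = 0")
      case True then show ?thesis using ne1 qk q(1) Mi by auto
    next
      case False
      then have "k - 1 \<in> K" using k1 unfolding K_def by auto
      then show ?thesis using Mge ne1 qk by fastforce
    qed
    have lt2: "q (Suc k) < M"
    proof (cases "Suc k = m")
      case True then show ?thesis using q(2) Mi by auto
    next
      case False
      then have "Suc k \<in> K" using k1 unfolding K_def by auto
      then show ?thesis using Mge ne2 qk by fastforce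
    qed
    have Ml: "M < length \<sigma>" using qlen k1 qk by auto
    have e1: "E (\<sigma> ! M) (\<sigma> ! q (k - 1))" using r1 graph_sym[OF G] qk unfolding Rp_def by blast
    have e2: "E (\<sigma> ! M) (\<sigma> ! q (Suc k))" using r2 qk unfolding Rp_def by blast
    show ?thesis
    proof (cases "q (k - 1) = q (Suc k)")
      case False
      have "E (\<sigma> ! q (k - 1)) (\<sigma> ! q (Suc k))"
        using P Ml lt1 lt2 e1 e2 False unfolding peo_def by blast
      then have rr: "Rp (q (k - 1)) (q (Suc (k - 1 + 1)))"
        using qlen k1 lt1 Ml unfolding Rp_def by auto
      define g where "g \<equiv> \<lambda>j. if j \<le> k - 1 then q j else q (j + 1)"
      have s1: "walk Rp g (m - 1)" and s2: "g 0 = q 0" and s3: "g (m - 1) = q m"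
        unfolding g_def
        by (rule shortcut[OF q(3), of "k - 1" 1]; use k1 rr in auto)+
      have "Q (m - 1)" unfolding Q_def using s1 s2 s3 q by auto
      then show ?thesis using minQ m0 by auto
    next
      case True
      have jn: "k - 1 + 2 \<le> m" using k1 by auto
      have jr: "Rp (q (k - 1)) (q (Suc (k - 1 + 2)))" if "k - 1 + 2 < m"
      proof -
        have "Rp (q (Suc k)) (q (Suc (Suc k)))" using q(3) that k1 unfolding walk_def by auto
        moreover have "Suc (k - 1 + 2) = Suc (Suc k)" using k1 by auto
        ultimately show ?thesis using True by simp
      qed
      have je: "q (k - 1) = q m" if "k - 1 + 2 = m"
      proof -
        have "Suc k = m" using that k1 by auto
        then show ?thesis using True by simp
      qed
      define g where "g \<equiv> \<lambda>j. if j \<le> k - 1 then q j else q (j + 2)"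
      have s1: "walk Rp g (m - 2)" and s2: "g 0 = q 0" and s3: "g (m - 2) = q m"
      proof -
        show "walk Rp g (m - 2)" unfolding g_def by (rule shortcut[OF q(3) jn jr je])
        show "g 0 = q 0" unfolding g_def by simp
        show "g (m - 2) = q m" using shortcut(3)[OF q(3) jn jr je] unfolding g_def by simp
      qed
      have "Q (m - 2)" unfolding Q_def using s1 s2 s3 q by auto
      then show ?thesis using minQ m0 by auto
    qed
  qed
qed



lemma left_nbrs_fin: "finite (left_nbrs E \<sigma> i)" unfolding left_nbrs_def by auto

lemma left_nbrs_Max:
  assumes "left_nbrs E \<sigma> i \<noteq> {}"
  shows "Max (left_nbrs E \<sigma> i) < i" "E (\<sigma> ! i) (\<sigma> ! Max (left_nbrs E \<sigma> i))"
proof -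
  have "Max (left_nbrs E \<sigma> i) \<in> left_nbrs E \<sigma> i" using Max_in[OF left_nbrs_fin assms] .
  then show "Max (left_nbrs E \<sigma> i) < i" "E (\<sigma> ! i) (\<sigma> ! Max (left_nbrs E \<sigma> i))"
    unfolding left_nbrs_def by auto
qed

theorem theorem9:
  fixes V :: "'a set" and E :: "'a \<Rightarrow> 'a \<Rightarrow> bool" and v :: 'a
  assumes "graph V E" and "connected_graph V E" and "chordal V E"
    and "card V \<ge> 2" and "v \<in> V"
  shows "(\<exists>\<sigma>. peo V E \<sigma> \<and> lbranch_leaf E \<sigma> v) \<longleftrightarrow> simplicial V E v"
proof
  note G = assms(1) and con = assms(2) and ch = assms(3) and c2 = assms(4) and vV = assms(5)
  assume "\<exists>\<sigma>. peo V E \<sigma> \<and> lbranch_leaf E \<sigma> v"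
  then obtain \<sigma> where P: "peo V E \<sigma>" and lb: "lbranch_leaf E \<sigma> v" by auto
  have d: "distinct \<sigma>" and st: "set \<sigma> = V" using P unfolding peo_def vertex_ordering_def by auto
  have vs: "v \<in> set \<sigma>" and vh: "v \<noteq> hd \<sigma>" and c1: "card {w. ltree_edge E \<sigma> v w} = 1"
    using lb unfolding lbranch_leaf_def by auto
  obtain i0 where i0: "i0 < length \<sigma>" "\<sigma> ! i0 = v" using vs by (metis in_set_conv_nth)
  have ne: "\<sigma> \<noteq> []" using vs by auto
  have i00: "i0 \<noteq> 0" using vh i0 ne by (metis hd_conv_nth)
  obtain z where z: "{w. ltree_edge E \<sigma> v w} = {z}" using c1 by (metis card_1_singletonE One_nat_def)
  have ln: "left_nbrs E \<sigma> i0 \<noteq> {}" using left_nbr[OF G con P _ i0(1)] i00 by auto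
  define pp where "pp = Max (left_nbrs E \<sigma> i0)"
  have pp: "pp < i0" using left_nbrs_Max[OF ln] unfolding pp_def by auto
  have "ltree_edge E \<sigma> v (\<sigma> ! pp)" unfolding ltree_edge_def
    using i0 i00 ln unfolding pp_def by blast
  then have zpp: "\<sigma> ! pp = z" using z by auto
  have noright: "\<not> E (\<sigma> ! i0) (\<sigma> ! k)" if "i0 < k" "k < length \<sigma>" for k
  proof
    assume ek: "E (\<sigma> ! i0) (\<sigma> ! k)"
    define Qk where "Qk k \<longleftrightarrow> i0 < k \<and> k < length \<sigma> \<and> E (\<sigma> ! i0) (\<sigma> ! k)" for k
    have "Qk k" using that ek unfolding Qk_def by auto
    define k' where "k' = (LEAST k. Qk k)"
    have Qk': "Qk k'" unfolding k'_def by (rule LeastI[of Qk, OF \<open>Qk k\<close>])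
    have mink: "\<not> Qk j" if "j < k'" for j using that not_less_Least unfolding k'_def by blast
    have k'1: "i0 < k'" "k' < length \<sigma>" "E (\<sigma> ! i0) (\<sigma> ! k')" using Qk' unfolding Qk_def by auto
    have "i0 \<in> left_nbrs E \<sigma> k'" unfolding left_nbrs_def using k'1 graph_sym[OF G, OF k'1(3)] by auto
    then have lnk: "left_nbrs E \<sigma> k' \<noteq> {}" by auto
    define mm where "mm = Max (left_nbrs E \<sigma> k')"
    have mm1: "i0 \<le> mm" unfolding mm_def using Max_ge[OF left_nbrs_fin \<open>i0 \<in> left_nbrs E \<sigma> k'\<close>] by simp
    have mm2: "mm < k'" "E (\<sigma> ! k') (\<sigma> ! mm)" using left_nbrs_Max[OF lnk] unfolding mm_def by auto
    show False
    proof (cases "mm = i0")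
      case True
      have "ltree_edge E \<sigma> v (\<sigma> ! k')" unfolding ltree_edge_def
        using k'1 lnk True i0(2) unfolding mm_def
        by (intro exI[of _ k']) auto
      then have "\<sigma> ! k' = z" using z by auto
      then have "\<sigma> ! k' = \<sigma> ! pp" using zpp by simp
      then have "k' = pp" using nth_eq_iff_index_eq[OF d k'1(2)] pp i0(1) by auto
      then show False using pp k'1 by auto
    next
      case False
      then have "i0 < mm" using mm1 by auto
      have "E (\<sigma> ! mm) (\<sigma> ! i0)"
        using P k'1 mm2 \<open>i0 < mm\<close> graph_sym[OF G, OF k'1(3)] False unfolding peo_def by blast
      then have "Qk mm" unfolding Qk_def using \<open>i0 < mm\<close> mm2 k'1 graph_sym[OF G] by auto
      then show False using mink mm2 by auto
    qed
  qed
  show "simplicial V E v" unfolding simplicial_def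
  proof (intro ballI impI)
    fix u w assume uV: "u \<in> V" and wV: "w \<in> V" and uw: "E v u \<and> E v w \<and> u \<noteq> w"
    obtain j where j: "j < length \<sigma>" "\<sigma> ! j = u" using uV st by (metis in_set_conv_nth)
    obtain l where l: "l < length \<sigma>" "\<sigma> ! l = w" using wV st by (metis in_set_conv_nth)
    have "j \<noteq> i0" using uw j i0 graph_irr[OF G] by auto
    moreover have "\<not> i0 < j" using noright j uw i0 by auto
    ultimately have ji: "j < i0" by auto
    have "l \<noteq> i0" using uw l i0 graph_irr[OF G] by auto
    moreover have "\<not> i0 < l" using noright l uw i0 by auto
    ultimately have li: "l < i0" by auto
    have "j \<noteq> l" using j l uw by auto
    then show "E u w" using P i0 ji li uw j l unfolding peo_def by blast
  qed
next
  note G = assms(1) and con = assms(2) and ch = assms(3) and c2 = assms(4) and vV = assms(5)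
  assume sv: "simplicial V E v"
  have finV: "finite V" using G unfolding graph_def by auto
  define V' where "V' = V - {v}"
  have G': "graph V' (restr E V')" using graph_restr[OF G] unfolding V'_def by auto
  have ch': "chordal V' (restr E V')" using chordal_restr[OF ch] unfolding V'_def by auto
  obtain \<sigma>' where p': "peo V' (restr E V') \<sigma>'" using peo_exists[OF G' ch'] by auto
  define \<sigma> where "\<sigma> = \<sigma>' @ [v]"
  have P: "peo V E \<sigma>" using peo_snoc[OF G vV sv] p' unfolding V'_def \<sigma>_def by auto
  have d: "distinct \<sigma>" using P unfolding peo_def vertex_ordering_def by auto
  have st': "set \<sigma>' = V'" using p' unfolding peo_def vertex_ordering_def by auto
  have "V' \<noteq> {}"
  proof
    assume "V' = {}"
    then have "V \<subseteq> {v}" unfolding V'_def by auto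
    then have "card V \<le> 1" using card_mono[of "{v}" V] by auto
    then show False using c2 by auto
  qed
  then have ne: "\<sigma>' \<noteq> []" using st' by auto
  define i0 where "i0 = length \<sigma>'"
  have i0: "i0 < length \<sigma>" "\<sigma> ! i0 = v" "length \<sigma> = Suc i0" unfolding i0_def \<sigma>_def by auto
  have i00: "0 < i0" using ne unfolding i0_def by auto
  have ln: "left_nbrs E \<sigma> i0 \<noteq> {}" using left_nbr[OF G con P i00 i0(1)] .
  define pp where "pp = Max (left_nbrs E \<sigma> i0)"
  have pp: "pp < i0" using left_nbrs_Max[OF ln] unfolding pp_def by auto
  have seteq: "{w. ltree_edge E \<sigma> v w} = {\<sigma> ! pp}"
  proof (intro equalityI subsetI)
    fix w assume "w \<in> {w. ltree_edge E \<sigma> v w}"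
    then obtain i where i: "0 < i" "i < length \<sigma>" "left_nbrs E \<sigma> i \<noteq> {}"
      and cs: "(v = \<sigma> ! i \<and> w = \<sigma> ! Max (left_nbrs E \<sigma> i)) \<or> (w = \<sigma> ! i \<and> v = \<sigma> ! Max (left_nbrs E \<sigma> i))"
      unfolding ltree_edge_def by blast
    have mi: "Max (left_nbrs E \<sigma> i) < i" using left_nbrs_Max[OF i(3)] by auto
    show "w \<in> {\<sigma> ! pp}"
    proof (cases "v = \<sigma> ! i")
      case True
      then have "i = i0" using nth_eq_iff_index_eq[OF d i(2) i0(1)] i0(2) by auto
      then show ?thesis using cs True unfolding pp_def by auto
    next
      case False
      then have "v = \<sigma> ! Max (left_nbrs E \<sigma> i)" using cs by auto
      moreover have ml: "Max (left_nbrs E \<sigma> i) < length \<sigma>" using mi i(2) by auto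
      ultimately have "Max (left_nbrs E \<sigma> i) = i0"
        using nth_eq_iff_index_eq[OF d ml i0(1)] i0(2) by auto
      then show ?thesis using mi i(2) i0(3) by auto
    qed
  next
    fix w assume "w \<in> {\<sigma> ! pp}"
    then have "w = \<sigma> ! pp" by auto
    then show "w \<in> {w. ltree_edge E \<sigma> v w}" unfolding ltree_edge_def
      using i0 i00 ln unfolding pp_def by blast
  qed
  have "lbranch_leaf E \<sigma> v" unfolding lbranch_leaf_def
  proof (intro conjI)
    show "v \<in> set \<sigma>" unfolding \<sigma>_def by auto
    have "hd \<sigma> = hd \<sigma>'" unfolding \<sigma>_def using ne by auto
    moreover have "hd \<sigma>' \<in> V'" using ne st' hd_in_set by blast
    ultimately show "v \<noteq> hd \<sigma>" unfolding V'_def by auto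
    show "card {w. ltree_edge E \<sigma> v w} = 1" using seteq by auto
  qed
  then show "\<exists>\<sigma>. peo V E \<sigma> \<and> lbranch_leaf E \<sigma> v" using P by blast
qed

end
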